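(* Let $M$ be a hyperk\"ahler manifold with $b_2(M)\ge 6$, let $\Lambda=H^2(M,\mathbb{Z})$ with its BBF form $q$, let $h\in\Lambda$ be primitive with $q(h)>0$ and $\Lambda_h=h^\perp\subset\Lambda$, and let $\mathrm{MBM}\subset\Lambda$ be the set of MBM classes. There exists an infinite sequence of primitive rank-two anisotropic sublattices $\mathbb{M}_j\subset\Lambda$, $j\in\mathbb{N}$, such that $h\in\mathbb{M}_j$, $\mathbb{M}_j\cap\Lambda_h=\mathbb{Z}v_j$ with $v_j$ primitive and $q(v_j)\to-\infty$ as $j\to+\infty$, and $\mathbb{M}_j\cap\mathrm{MBM}=\emptyset$ for all $j$.
   Context: A hyperk\"ahler manifold is a compact simply connected complex manifold admitting a Riemannian metric with holonomy $\mathrm{Sp}(n)$. The BBF form $q$ on $\Lambda=H^2(M,\mathbb{Z})$ is rescaled to be integral and primitive; it has signature $(3,b_2(M)-3)$. MBM classes (in the sense of Amerik--Verbitsky) form a monodromy-invariant subset $\mathrm{MBM}\subset\Lambda$ of classes with negative square (they are the classes whose orthogonal hyperplanes give walls of K\"ahler cones on deformations of $M$); there is $N>0$ with $-N\le q(v)<0$ for all $v\in\mathrm{MBM}$. A lattice is anisotropic if it has no nonzero vector $x$ with $q(x)=0$. *)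

theory Defs
  imports "HOL-Analysis.Analysis"
begin

text \<open>The lattice Lambda = H^2(M,Z) is modelled as Z^n (type int^'n, n = b_2(M)),
  the BBF form by its integral symmetric Gram matrix B.\<close>

definition bil :: "('n::finite \<Rightarrow> 'n \<Rightarrow> int) \<Rightarrow> int^'n \<Rightarrow> int^'n \<Rightarrow> int" where
  "bil B x y = (\<Sum>i\<in>UNIV. \<Sum>j\<in>UNIV. x$i * B i j * y$j)"

definition qf :: "('n::finite \<Rightarrow> 'n \<Rightarrow> int) \<Rightarrow> int^'n \<Rightarrow> int" where
  "qf B x = bil B x x"

definition qfR :: "('n::finite \<Rightarrow> 'n \<Rightarrow> int) \<Rightarrow> real^'n \<Rightarrow> real" where
  "qfR B x = (\<Sum>i\<in>UNIV. \<Sum>j\<in>UNIV. x$i * real_of_int (B i j) * x$j)"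

definition symmetric_form :: "('n::finite \<Rightarrow> 'n \<Rightarrow> int) \<Rightarrow> bool" where
  "symmetric_form B \<longleftrightarrow> (\<forall>i j. B i j = B j i)"

definition primitive_form :: "('n::finite \<Rightarrow> 'n \<Rightarrow> int) \<Rightarrow> bool" where
  "primitive_form B \<longleftrightarrow> (\<forall>d::int. (\<forall>i j. d dvd B i j) \<longrightarrow> \<bar>d\<bar> = 1)"

text \<open>Signature (p,m) over the reals (with p + m = n this means nondegenerate).\<close>
definition has_signature :: "('n::finite \<Rightarrow> 'n \<Rightarrow> int) \<Rightarrow> nat \<Rightarrow> nat \<Rightarrow> bool" where
  "has_signature B p m \<longleftrightarrow> p + m = CARD('n) \<and>
     (\<exists>V W :: (real^'n) set. subspace V \<and> dim V = p \<and> (\<forall>x\<in>V. x \<noteq> 0 \<longrightarrow> qfR B x > 0) \<and>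
                             subspace W \<and> dim W = m \<and> (\<forall>x\<in>W. x \<noteq> 0 \<longrightarrow> qfR B x < 0))"

definition to_real :: "int^'n \<Rightarrow> real^'n" where
  "to_real x = (\<chi> i. real_of_int (x$i))"

definition primitive_vec :: "int^'n \<Rightarrow> bool" where
  "primitive_vec v \<longleftrightarrow> (\<forall>(k::int) x. v = k *s x \<longrightarrow> \<bar>k\<bar> = 1)"

definition sublattice :: "(int^'n) set \<Rightarrow> bool" where
  "sublattice L \<longleftrightarrow> 0 \<in> L \<and> (\<forall>x\<in>L. \<forall>y\<in>L. x + y \<in> L \<and> x - y \<in> L)"

definition lattice_rank :: "(int^'n::finite) set \<Rightarrow> nat" where
  "lattice_rank L = dim (to_real ` L)"

definition primitive_sublattice :: "(int^'n) set \<Rightarrow> bool" where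
  "primitive_sublattice L \<longleftrightarrow> sublattice L \<and>
     (\<forall>(k::int) x. k \<noteq> 0 \<longrightarrow> k *s x \<in> L \<longrightarrow> x \<in> L)"

definition anisotropic :: "('n::finite \<Rightarrow> 'n \<Rightarrow> int) \<Rightarrow> (int^'n) set \<Rightarrow> bool" where
  "anisotropic B L \<longleftrightarrow> (\<forall>x\<in>L. qf B x = 0 \<longrightarrow> x = 0)"

definition orth_compl :: "('n::finite \<Rightarrow> 'n \<Rightarrow> int) \<Rightarrow> int^'n \<Rightarrow> (int^'n) set" where
  "orth_compl B h = {x. bil B h x = 0}"

end

theory Submission
  imports Defs "HOL-Number_Theory.Number_Theory"
begin


lemma fermat_int:
  fixes p :: nat and a :: int
  assumes "prime p" "\<not> int p dvd a"
  shows "[a ^ (p - 1) = 1] (mod int p)"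
proof -
  define a' where "a' = nat (a mod int p)"
  have p0: "int p > 0" using assms(1) prime_gt_0_nat by auto
  have ia: "int a' = a mod int p" using p0 unfolding a'_def by simp
  have c1: "[a = int a'] (mod int p)" using ia by (simp add: cong_def)
  have "\<not> p dvd a'"
  proof
    assume "p dvd a'"
    then have "int p dvd int a'" by simp
    then have "int p dvd a" using ia by (simp add: dvd_mod_iff)
    then show False using assms(2) by simp
  qed
  then have "[a' ^ (p - 1) = 1] (mod p)" using fermat_theorem assms(1) by blast
  then have "[int a' ^ (p - 1) = 1] (mod int p)" by (metis cong_int_iff of_nat_1 of_nat_power)
  moreover have "[a ^ (p - 1) = int a' ^ (p - 1)] (mod int p)" using c1 by (rule cong_pow)
  ultimately show ?thesis using cong_trans by blast
qed

lemma sum_sq_3mod4: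
  fixes p :: nat and u w :: int
  assumes p: "prime p" "p mod 4 = 3" and d: "int p dvd u\<^sup>2 + w\<^sup>2"
  shows "int p dvd w"
proof (rule ccontr)
  assume nw: "\<not> int p dvd w"
  have pp: "prime (int p)" using p by simp
  have nu: "\<not> int p dvd u"
  proof
    assume "int p dvd u"
    then have "int p dvd u\<^sup>2" by (simp add: power2_eq_square)
    then have "int p dvd w\<^sup>2" using d by (simp add: dvd_add_right_iff)
    then show False using nw pp prime_dvd_power by blast
  qed
  define e where "e = (p - 1) div 2"
  have pe: "p - 1 = 2 * e" using p(2) unfolding e_def by presburger
  have oe: "odd e" using p(2) unfolding e_def by presburger
  have c: "[u\<^sup>2 = - (w\<^sup>2)] (mod int p)" using d
    by (simp add: cong_iff_dvd_diff)
  have "[u ^ (p - 1) = (u\<^sup>2) ^ e] (mod int p)" using pe by (simp add: power_mult)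
  also have "[(u\<^sup>2) ^ e = (- (w\<^sup>2)) ^ e] (mod int p)" using c by (rule cong_pow)
  also have "(- (w\<^sup>2)) ^ e = - (w ^ (p - 1))" using oe pe by (simp add: power_mult)
  finally have c2: "[u ^ (p - 1) = - (w ^ (p - 1))] (mod int p)" .
  have "[u ^ (p - 1) = 1] (mod int p)" using fermat_int p(1) nu by blast
  moreover have "[- (w ^ (p - 1)) = - 1] (mod int p)" using fermat_int[OF p(1) nw] cong_minus_minus_iff by blast
  ultimately have "[1 = -1] (mod int p)" using c2 by (meson cong_sym cong_trans)
  then have "int p dvd 2" by (simp add: cong_iff_dvd_diff)
  then have "p dvd 2" by presburger
  then have "p \<le> 2" by (simp add: dvd_imp_le)
  then show False using p(2) by simp
qed

lemma factor3:
  fixes n :: nat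
  shows "n mod 4 = 3 \<Longrightarrow> \<exists>p. prime p \<and> p dvd n \<and> p mod 4 = 3"
proof (induction n rule: less_induct)
  case (less n)
  have "n \<noteq> 1" using less.prems by auto
  then obtain q where q: "prime q" "q dvd n" using prime_factor_nat by blast
  show ?case
  proof (cases "q mod 4 = 3")
    case True then show ?thesis using q by blast
  next
    case False
    obtain n' where n': "n = q * n'" using q(2) by blast
    have "odd n" using less.prems by presburger
    then have "odd q" using n' by simp
    then have q1: "q mod 4 = 1" using False by presburger
    have "n mod 4 = ((q mod 4) * (n' mod 4)) mod 4" using n' by (simp add: mod_mult_eq)
    then have "n mod 4 = (n' mod 4) mod 4" using q1 by simp
    then have n'3: "n' mod 4 = 3" using less.prems by simp
    have "q > 1" using q(1) prime_gt_1_nat by blast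
    moreover have "n' > 0" using n'3 by (cases n') auto
    ultimately have "n' < n" using n' by simp
    then obtain p where "prime p" "p dvd n'" "p mod 4 = 3" using less.IH n'3 by blast
    then show ?thesis using n' by auto
  qed
qed

lemma prime_3mod4_exists:
  fixes k :: int and b :: nat
  assumes k: "k > 0"
  shows "\<exists>p c. prime p \<and> p > b \<and> p mod 4 = 3 \<and> int p dvd k * c\<^sup>2 - 1"
proof -
  define L where "L = (fact b :: nat)"
  define Z where "Z = 4 * k * (int L)\<^sup>2 - 1"
  have L1: "L \<ge> 1" unfolding L_def by (simp add: fact_ge_1)
  have "4 * k * (int L)\<^sup>2 \<ge> 4" using k L1
  proof -
    have "(int L)\<^sup>2 \<ge> 1" using L1 by simp
    then have "k * (int L)\<^sup>2 \<ge> 1" using k by (metis mult_le_cancel_right1 zero_less_one_class.zero_le_one order.trans mult_left_mono less_imp_le int_one_le_iff_zero_less mult.commute)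
    then show ?thesis by simp
  qed
  then have Zp: "Z > 0" unfolding Z_def by simp
  have gen: "\<And>K::int. (4 * K - 1) mod 4 = 3" by presburger
  have Z3: "Z mod 4 = 3" unfolding Z_def using gen[of "k * (int L)\<^sup>2"] by (simp add: mult.assoc)
  have "nat Z mod 4 = 3" using Zp Z3 nat_mod_distrib[of Z 4] by simp
  then obtain p where p: "prime p" "p dvd nat Z" "p mod 4 = 3" using factor3 by blast
  have "int p dvd int (nat Z)" using p(2) by (simp only: of_nat_dvd_iff)
  then have pz: "int p dvd Z" using Zp by simp
  have "p > b"
  proof (rule ccontr)
    assume "\<not> p > b"
    moreover have "1 \<le> p" using p(1) prime_ge_1_nat by blast
    ultimately have "p dvd L" unfolding L_def by (simp add: dvd_fact)
    then have "int p dvd 4 * k * (int L)\<^sup>2" by (simp add: power2_eq_square)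
    then have "int p dvd 1" using pz unfolding Z_def by (metis dvd_diff_commute dvd_minus_iff dvd_add_right_iff diff_conv_add_uminus)
    then show False using p(1) by simp
  qed
  moreover have "k * (2 * int L)\<^sup>2 - 1 = Z" unfolding Z_def by (simp add: power2_eq_square algebra_simps)
  then have "int p dvd k * (2 * int L)\<^sup>2 - 1" using pz by simp
  ultimately show ?thesis using p by blast
qed

lemma inj_sq:
  fixes p :: nat and c x x' :: int
  assumes p: "prime p" "p > 2" and c: "\<not> int p dvd c"
    and x: "0 \<le> x" "x \<le> (int p - 1) div 2" and x': "0 \<le> x'" "x' \<le> (int p - 1) div 2"
    and d: "int p dvd c * x\<^sup>2 - c * x'\<^sup>2"
  shows "x = x'"
proof -
  have pp: "prime (int p)" using p by simp
  have "c * x\<^sup>2 - c * x'\<^sup>2 = c * ((x - x') * (x + x'))" by (simp add: algebra_simps power2_eq_square)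
  then have "int p dvd (x - x') * (x + x')" using d c pp by (metis prime_dvd_mult_iff)
  then have "int p dvd (x - x') \<or> int p dvd (x + x')" using pp by (simp add: prime_dvd_mult_iff)
  moreover have "\<bar>x - x'\<bar> < int p" using x x' by linarith
  moreover have "x + x' < int p" using x x' by linarith
  moreover have "x - x' = 0" if "int p dvd (x - x')" "\<bar>x - x'\<bar> < int p"
  proof (rule ccontr)
    assume "x - x' \<noteq> 0"
    then have "\<bar>int p\<bar> \<le> \<bar>x - x'\<bar>" using that(1) by (rule dvd_imp_le_int)
    then show False using that(2) by simp
  qed
  moreover have "x + x' = 0" if "int p dvd (x + x')" "x + x' < int p"
  proof (rule ccontr)
    assume "x + x' \<noteq> 0"
    then have "\<bar>int p\<bar> \<le> \<bar>x + x'\<bar>" using that(1) by (rule dvd_imp_le_int)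
    then show False using that(2) x x' by simp
  qed
  ultimately show ?thesis using x x' by force
qed

lemma iso_mod_p:
  fixes p :: nat and a1 a2 a3 :: int
  assumes p: "prime p" "p > 2" and a1: "\<not> int p dvd a1" and a2: "\<not> int p dvd a2"
  shows "\<exists>x y. int p dvd a1 * x\<^sup>2 + a2 * y\<^sup>2 + a3"
proof (rule ccontr)
  assume nex: "\<not> ?thesis"
  define P where "P = int p"
  define H where "H = (P - 1) div 2"
  define I where "I = {0..H}"
  define f where "f = (\<lambda>x. (a1 * x\<^sup>2) mod P)"
  define g where "g = (\<lambda>y. (- a3 - a2 * y\<^sup>2) mod P)"
  have oddp: "odd p" using p prime_odd_nat by blast
  then have PH: "P = 2 * H + 1" unfolding P_def H_def by presburger
  have Pp: "P > 0" unfolding P_def using p by simp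
  have injf: "inj_on f I"
  proof (rule inj_onI)
    fix x x' assume "x \<in> I" "x' \<in> I" "f x = f x'"
    then show "x = x'" using inj_sq[OF p a1, of x x'] unfolding I_def f_def H_def P_def
      by (simp add: mod_eq_dvd_iff)
  qed
  have injg: "inj_on g I"
  proof (rule inj_onI)
    fix x x' assume "x \<in> I" "x' \<in> I" "g x = g x'"
    then have "P dvd (- a3 - a2 * x\<^sup>2) - (- a3 - a2 * x'\<^sup>2)" unfolding g_def by (simp add: mod_eq_dvd_iff)
    then have "P dvd a2 * x'\<^sup>2 - a2 * x\<^sup>2" by (simp add: algebra_simps)
    then show "x = x'" using inj_sq[OF p a2, of x' x] \<open>x \<in> I\<close> \<open>x' \<in> I\<close> unfolding I_def H_def P_def by simp
  qed
  have cI: "card I = nat (H + 1)" unfolding I_def by simp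
  have sub: "f ` I \<union> g ` I \<subseteq> {0..<P}" unfolding f_def g_def using Pp by auto
  have disj: "f ` I \<inter> g ` I = {}"
  proof (rule ccontr)
    assume "f ` I \<inter> g ` I \<noteq> {}"
    then obtain x y where "f x = g y" by blast
    then have "P dvd a1 * x\<^sup>2 - (- a3 - a2 * y\<^sup>2)" unfolding f_def g_def by (simp add: mod_eq_dvd_iff)
    then have "P dvd a1 * x\<^sup>2 + a2 * y\<^sup>2 + a3" by (simp add: algebra_simps)
    then show False using nex unfolding P_def by blast
  qed
  have "card (f ` I \<union> g ` I) = card (f ` I) + card (g ` I)"
    using disj unfolding I_def by (simp add: card_Un_disjoint)
  also have "\<dots> = 2 * nat (H + 1)" using card_image[OF injf] card_image[OF injg] cI by simp
  finally have c1: "card (f ` I \<union> g ` I) = 2 * nat (H + 1)" .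
  have "card (f ` I \<union> g ` I) \<le> card {0..<P}" by (rule card_mono) (simp, rule sub)
  then show False using c1 PH Pp by simp
qed

lemma hensel3:
  fixes p :: nat and a1 a2 a3 :: int
  assumes p: "prime p" "p > 2" and a1: "\<not> int p dvd a1" and a2: "\<not> int p dvd a2"
    and a3: "\<not> int p dvd a3"
  shows "\<exists>x y z. int p dvd a1 * x\<^sup>2 + a2 * y\<^sup>2 + a3 * z\<^sup>2
      \<and> \<not> (int p)\<^sup>2 dvd a1 * x\<^sup>2 + a2 * y\<^sup>2 + a3 * z\<^sup>2"
proof -
  define P where "P = int p"
  obtain x y where xy: "P dvd a1 * x\<^sup>2 + a2 * y\<^sup>2 + a3" using iso_mod_p[OF p a1 a2] unfolding P_def by blast
  show ?thesis
  proof (cases "P\<^sup>2 dvd a1 * x\<^sup>2 + a2 * y\<^sup>2 + a3")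
    case False
    then show ?thesis using xy unfolding P_def by (metis mult.right_neutral one_power2)
  next
    case True
    have eq: "a1 * x\<^sup>2 + a2 * y\<^sup>2 + a3 * (1 + P)\<^sup>2 = (a1 * x\<^sup>2 + a2 * y\<^sup>2 + a3) + P * (2 * a3) + P\<^sup>2 * a3"
      by (simp add: algebra_simps power2_eq_square)
    have d1: "P dvd a1 * x\<^sup>2 + a2 * y\<^sup>2 + a3 * (1 + P)\<^sup>2" unfolding eq using xy
      by (simp add: power2_eq_square)
    have "\<not> P\<^sup>2 dvd a1 * x\<^sup>2 + a2 * y\<^sup>2 + a3 * (1 + P)\<^sup>2"
    proof
      assume "P\<^sup>2 dvd a1 * x\<^sup>2 + a2 * y\<^sup>2 + a3 * (1 + P)\<^sup>2"
      then have "P\<^sup>2 dvd P * (2 * a3)" unfolding eq using True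
        by (metis dvd_add_left_iff dvd_add_right_iff dvd_triv_left)
      then have "P dvd 2 * a3" using p unfolding P_def by (simp add: power2_eq_square)
      then have "P dvd 2 \<or> P dvd a3" using p unfolding P_def by (simp add: prime_dvd_mult_iff)
      moreover have "\<not> P dvd 2"
      proof
        assume "P dvd 2"
        then have "p dvd 2" unfolding P_def by presburger
        then have "p \<le> 2" by (rule dvd_imp_le) simp
        then show False using p by simp
      qed
      ultimately show False using a3 unfolding P_def by blast
    qed
    then show ?thesis using d1 unfolding P_def by blast
  qed
qed

lemma crt_int:
  fixes S :: "nat set" and u :: "nat \<Rightarrow> int"
  assumes fin: "finite S" and pr: "\<forall>p\<in>S. prime p"
  shows "\<exists>X::int. \<forall>p\<in>S. [X = u p] (mod int (p\<^sup>2))"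
proof -
  define u' where "u' = (\<lambda>p. nat (u p mod int (p\<^sup>2)))"
  have cop: "\<forall>i\<in>S. \<forall>j\<in>S. i \<noteq> j \<longrightarrow> coprime (i\<^sup>2) (j\<^sup>2)"
    using pr by (simp add: primes_coprime)
  obtain X where X: "\<forall>i\<in>S. [X = u' i] (mod i\<^sup>2)"
    using chinese_remainder_nat[OF fin cop, of u'] by blast
  have "[int X = u p] (mod int (p\<^sup>2))" if "p \<in> S" for p
  proof -
    have pos: "int (p\<^sup>2) > 0" using pr that prime_gt_0_nat by simp
    have "[int X = int (u' p)] (mod int (p\<^sup>2))" unfolding cong_int_iff using X that by blast
    moreover have "int (u' p) = u p mod int (p\<^sup>2)" unfolding u'_def using pos by simp
    ultimately show ?thesis by (simp add: cong_def)
  qed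
  then show ?thesis by blast
qed

lemma aniso_descent:
  fixes P :: nat and A D :: int
  assumes p: "prime P" and nA: "\<not> int P dvd A" and dD: "int P dvd D" and nD: "\<not> (int P)\<^sup>2 dvd D"
  shows "A * a\<^sup>2 + D * b\<^sup>2 = 0 \<Longrightarrow> a = 0 \<and> b = 0"
proof (induction "nat \<bar>a\<bar>" arbitrary: a b rule: less_induct)
  case less
  have pp: "prime (int P)" using p by simp
  have D0: "D \<noteq> 0" using nD by auto
  show ?case
  proof (cases "a = 0")
    case True
    then show ?thesis using less.prems D0 by simp
  next
    case False
    have "int P dvd A * a\<^sup>2"
    proof -
      have "A * a\<^sup>2 = - (D * b\<^sup>2)" using less.prems by simp
      then show ?thesis using dD by simp
    qed
    then have "int P dvd a\<^sup>2" using nA pp by (simp add: prime_dvd_mult_iff)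
    then have "int P dvd a" using pp prime_dvd_power by blast
    then obtain a' where a': "a = int P * a'" by blast
    have "(int P)\<^sup>2 dvd D * b\<^sup>2"
    proof -
      have "D * b\<^sup>2 = - ((int P)\<^sup>2 * (A * a'\<^sup>2))" using less.prems a' by (simp add: algebra_simps power2_eq_square)
      then show ?thesis by simp
    qed
    have "int P dvd b"
    proof (rule ccontr)
      assume "\<not> int P dvd b"
      then have "coprime (int P) b" using pp by (simp add: prime_imp_coprime)
      then have "coprime ((int P)\<^sup>2) (b\<^sup>2)" by simp
      then have "(int P)\<^sup>2 dvd D" using \<open>(int P)\<^sup>2 dvd D * b\<^sup>2\<close> by (simp add: coprime_dvd_mult_left_iff)
      then show False using nD by simp
    qed
    then obtain b' where b': "b = int P * b'" by blast
    have "(int P)\<^sup>2 * (A * a'\<^sup>2 + D * b'\<^sup>2) = 0" using less.prems a' b' by (simp add: algebra_simps power2_eq_square)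
    then have eq': "A * a'\<^sup>2 + D * b'\<^sup>2 = 0" using pp by simp
    have P1: "int P > 1" using p prime_gt_1_nat by simp
    have "a' \<noteq> 0" using False a' by simp
    then have "\<bar>a'\<bar> < \<bar>a\<bar>" using a' P1 by (simp add: abs_mult)
    then have "nat \<bar>a'\<bar> < nat \<bar>a\<bar>" by simp
    then have "a' = 0" using less.hyps eq' by blast
    then show ?thesis using \<open>a' \<noteq> 0\<close> by simp
  qed
qed

lemma mbm_descent:
  fixes P :: nat and A D m c :: int
  assumes p: "prime P" "P mod 4 = 3" and dm: "int P dvd m * A * c\<^sup>2 - 1"
    and dD: "int P dvd D" and nD: "\<not> (int P)\<^sup>2 dvd D"
  shows "f \<noteq> 0 \<Longrightarrow> f\<^sup>2 * (- m) = A * a\<^sup>2 + D * b\<^sup>2 \<Longrightarrow> False"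
proof (induction "nat \<bar>f\<bar>" arbitrary: f a b rule: less_induct)
  case less
  have pp: "prime (int P)" using p by simp
  have nA: "\<not> int P dvd A"
  proof
    assume "int P dvd A"
    then have "int P dvd m * A * c\<^sup>2" by simp
    then have "int P dvd 1" using dm by (metis dvd_diff_right_iff)
    then show False using pp by (simp add: prime_int_iff)
  qed
  have s1: "int P dvd A * a\<^sup>2 + m * f\<^sup>2"
  proof -
    have "A * a\<^sup>2 + m * f\<^sup>2 = - (D * b\<^sup>2)" using less.prems(2) by (simp add: algebra_simps)
    then show ?thesis using dD by simp
  qed
  have "(A * a * c)\<^sup>2 + f\<^sup>2 = A * c\<^sup>2 * (A * a\<^sup>2 + m * f\<^sup>2) - f\<^sup>2 * (m * A * c\<^sup>2 - 1)"
    by (simp add: algebra_simps power2_eq_square)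
  then have "int P dvd (A * a * c)\<^sup>2 + f\<^sup>2" using s1 dm by simp
  then have "int P dvd f" using sum_sq_3mod4[OF p] by blast
  then obtain f' where f': "f = int P * f'" by blast
  have "int P dvd A * a\<^sup>2"
  proof -
    have "A * a\<^sup>2 = (A * a\<^sup>2 + m * f\<^sup>2) - m * f\<^sup>2" by simp
    moreover have "int P dvd m * f\<^sup>2" using \<open>int P dvd f\<close> by (simp add: power2_eq_square)
    ultimately show ?thesis using s1 by (metis dvd_diff)
  qed
  then have "int P dvd a\<^sup>2" using nA pp by (simp add: prime_dvd_mult_iff)
  then have "int P dvd a" using pp prime_dvd_power by blast
  then obtain a' where a': "a = int P * a'" by blast
  have "(int P)\<^sup>2 dvd D * b\<^sup>2"
  proof -
    have "D * b\<^sup>2 = (int P)\<^sup>2 * (f'\<^sup>2 * (- m) - A * a'\<^sup>2)" using less.prems(2) a' f' by (simp add: algebra_simps power2_eq_square)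
    then show ?thesis by simp
  qed
  have "int P dvd b"
  proof (rule ccontr)
    assume "\<not> int P dvd b"
    then have "coprime (int P) b" using pp by (simp add: prime_imp_coprime)
    then have "coprime ((int P)\<^sup>2) (b\<^sup>2)" by simp
    then have "(int P)\<^sup>2 dvd D" using \<open>(int P)\<^sup>2 dvd D * b\<^sup>2\<close> by (simp add: coprime_dvd_mult_left_iff)
    then show False using nD by simp
  qed
  then obtain b' where b': "b = int P * b'" by blast
  have "(int P)\<^sup>2 * (f'\<^sup>2 * (- m)) = (int P)\<^sup>2 * (A * a'\<^sup>2 + D * b'\<^sup>2)"
    using less.prems(2) a' b' f' by (simp add: algebra_simps power2_eq_square)
  moreover have nz: "(int P)\<^sup>2 \<noteq> 0" using p by (simp add: prime_gt_0_nat)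
  ultimately have eq': "f'\<^sup>2 * (- m) = A * a'\<^sup>2 + D * b'\<^sup>2" using mult_left_cancel[OF nz] by blast
  have P1: "int P > 1" using p prime_gt_1_nat by simp
  have "f' \<noteq> 0" using less.prems(1) f' by simp
  then have "\<bar>f'\<bar> < \<bar>f\<bar>" using f' P1 by (simp add: abs_mult)
  then have "nat \<bar>f'\<bar> < nat \<bar>f\<bar>" by simp
  then show False using less.hyps eq' \<open>f' \<noteq> 0\<close> by blast
qed



definition bilR :: "('n::finite \<Rightarrow> 'n \<Rightarrow> int) \<Rightarrow> real^'n \<Rightarrow> real^'n \<Rightarrow> real" where
  "bilR B x y = (\<Sum>i\<in>UNIV. \<Sum>j\<in>UNIV. x$i * real_of_int (B i j) * y$j)"

lemma qfR_bilR: "qfR B x = bilR B x x"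
  unfolding qfR_def bilR_def by simp

lemma bil_sym: "symmetric_form B \<Longrightarrow> bil B x y = bil B y x"
  unfolding bil_def symmetric_form_def
  by (subst sum.swap) (simp add: mult.commute mult.left_commute)

lemma bilR_sym: "symmetric_form B \<Longrightarrow> bilR B x y = bilR B y x"
  unfolding bilR_def symmetric_form_def
  by (subst sum.swap) (simp add: mult.commute mult.left_commute)

lemma bil_add1: "bil B (x + y) z = bil B x z + bil B y z"
  unfolding bil_def by (simp add: algebra_simps sum.distrib)
lemma bil_add2: "bil B z (x + y) = bil B z x + bil B z y"
  unfolding bil_def by (simp add: algebra_simps sum.distrib)
lemma bil_diff1: "bil B (x - y) z = bil B x z - bil B y z"
  unfolding bil_def by (simp add: algebra_simps sum_subtractf)
lemma bil_diff2: "bil B z (x - y) = bil B z x - bil B z y"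
  unfolding bil_def by (simp add: algebra_simps sum_subtractf)
lemma bil_smult1: "bil B (k *s x) y = k * bil B x y"
  unfolding bil_def by (simp add: algebra_simps sum_distrib_left)
lemma bil_smult2: "bil B y (k *s x) = k * bil B y x"
  unfolding bil_def by (simp add: algebra_simps sum_distrib_left)
lemma bil_zero1[simp]: "bil B 0 y = 0"
  unfolding bil_def by simp
lemma bil_zero2[simp]: "bil B y 0 = 0"
  unfolding bil_def by simp
lemma bil_sum2: "bil B y (\<Sum>e\<in>E. f e *s e) = (\<Sum>e\<in>E. f e * bil B y e)"
proof (induction E rule: infinite_finite_induct)
  case (infinite A) then show ?case by simp
next
  case empty then show ?case by simp
next
  case (insert x F) then show ?case by (simp add: bil_add2 bil_smult2)
qed

lemma bilR_add1: "bilR B (x + y) z = bilR B x z + bilR B y z"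
  unfolding bilR_def by (simp add: algebra_simps sum.distrib)
lemma bilR_add2: "bilR B z (x + y) = bilR B z x + bilR B z y"
  unfolding bilR_def by (simp add: algebra_simps sum.distrib)
lemma bilR_diff1: "bilR B (x - y) z = bilR B x z - bilR B y z"
  unfolding bilR_def by (simp add: algebra_simps sum_subtractf)
lemma bilR_scale1: "bilR B (k *\<^sub>R x) y = k * bilR B x y"
  unfolding bilR_def by (simp add: algebra_simps sum_distrib_left)
lemma bilR_scale2: "bilR B y (k *\<^sub>R x) = k * bilR B y x"
  unfolding bilR_def by (simp add: algebra_simps sum_distrib_left)

lemma bilR_to_real: "bilR B (to_real x) (to_real y) = real_of_int (bil B x y)"
  unfolding bilR_def bil_def to_real_def by simp

lemma to_real_smult: "to_real (k *s x) = real_of_int k *\<^sub>R to_real x"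
  unfolding to_real_def by (simp add: vec_eq_iff)
lemma to_real_add: "to_real (x + y) = to_real x + to_real y"
  unfolding to_real_def by (simp add: vec_eq_iff)
lemma to_real_diff: "to_real (x - y) = to_real x - to_real y"
  unfolding to_real_def by (simp add: vec_eq_iff)
lemma to_real_zero[simp]: "to_real 0 = 0"
  unfolding to_real_def by (simp add: vec_eq_iff)
lemma to_real_inj: "to_real x = 0 \<Longrightarrow> x = 0"
  unfolding to_real_def by (simp add: vec_eq_iff)
lemma to_real_sum: "to_real (\<Sum>e\<in>E. f e) = (\<Sum>e\<in>E. to_real (f e))"
proof (induction E rule: infinite_finite_induct)
  case (infinite A) then show ?case by simp
next
  case empty then show ?case by simp
next
  case (insert x F) then show ?case by (simp add: to_real_add)
qed

lemma qf_comb: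
  assumes "symmetric_form B"
  shows "qf B (a *s h + b *s v) = a\<^sup>2 * qf B h + 2 * a * b * bil B h v + b\<^sup>2 * qf B v"
  unfolding qf_def using bil_sym[OF assms, of v h]
  by (simp add: bil_add1 bil_add2 bil_smult1 bil_smult2 algebra_simps power2_eq_square)

lemma qf_comb3:
  assumes "symmetric_form B" "bil B u v = 0" "bil B u w = 0" "bil B v w = 0"
  shows "qf B (a *s u + b *s v + c *s w) = a\<^sup>2 * qf B u + b\<^sup>2 * qf B v + c\<^sup>2 * qf B w"
  unfolding qf_def using bil_sym[OF assms(1), of v u] bil_sym[OF assms(1), of w u] bil_sym[OF assms(1), of w v] assms
  by (simp add: bil_add1 bil_add2 bil_smult1 bil_smult2 algebra_simps power2_eq_square)

lemma dim_inter_nonzero: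
  fixes S T :: "(real^'n) set"
  assumes "subspace S" "subspace T" "dim S + dim T > CARD('n)"
  shows "\<exists>y. y \<in> S \<and> y \<in> T \<and> y \<noteq> 0"
proof (rule ccontr)
  assume "\<not> ?thesis"
  then have "S \<inter> T \<subseteq> {0}" by auto
  then have "dim (S \<inter> T) = 0" by simp
  moreover have "dim {x + y |x y. x \<in> S \<and> y \<in> T} \<le> CARD('n)" by (rule dim_subset_UNIV_cart)
  ultimately show False using dim_sums_Int[OF assms(1,2)] assms(3) by linarith
qed

lemma nondeg_R:
  fixes B :: "'n::finite \<Rightarrow> 'n \<Rightarrow> int"
  assumes sym: "symmetric_form B" and sign: "has_signature B 3 (CARD('n) - 3)"
    and n3: "CARD('n) \<ge> 3"
    and rad: "\<forall>y. bilR B x y = 0"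
  shows "x = 0"
proof (rule ccontr)
  assume x0: "x \<noteq> 0"
  obtain V W :: "(real^'n) set" where V: "subspace V" "dim V = 3" "\<forall>x\<in>V. x \<noteq> 0 \<longrightarrow> qfR B x > 0"
    and W: "subspace W" "dim W = CARD('n) - 3" "\<forall>x\<in>W. x \<noteq> 0 \<longrightarrow> qfR B x < 0"
    using sign unfolding has_signature_def by blast
  have qx: "qfR B x = 0" using rad by (simp add: qfR_bilR)
  show False
  proof (cases "x \<in> V")
    case True
    then show False using V(3) x0 qx by auto
  next
    case False
    define S where "S = span (insert x V)"
    have spV: "span V = V" using V(1) by simp
    have sS: "subspace S" unfolding S_def by simp
    have xs: "x \<notin> span V" unfolding spV by (rule False)
    have "dim S = dim V + 1" unfolding S_def dim_span using xs by (simp add: dim_insert)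
    then have "dim S + dim W > CARD('n)" using V(2) W(2) n3 by simp
    then obtain y where y: "y \<in> S" "y \<in> W" "y \<noteq> 0" using dim_inter_nonzero[OF sS W(1)] by blast
    obtain k where k: "y - k *\<^sub>R x \<in> V" using y(1) spV unfolding S_def span_insert by auto
    define s where "s = y - k *\<^sub>R x"
    have ys: "y = s + k *\<^sub>R x" unfolding s_def by simp
    have "qfR B y = qfR B s"
    proof -
      have "bilR B s x = 0" using rad bilR_sym[OF sym, of s x] by simp
      then show ?thesis unfolding qfR_bilR ys
        using rad by (simp add: bilR_add1 bilR_add2 bilR_scale1 bilR_scale2)
    qed
    moreover have "qfR B s \<ge> 0"
    proof (cases "s = 0")
      case True then show ?thesis by (simp add: qfR_bilR bilR_def)
    next
      case False then show ?thesis using V(3) k unfolding s_def by (simp add: less_imp_le)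
    qed
    moreover have "qfR B y < 0" using W(3) y by blast
    ultimately show False by simp
  qed
qed

lemma nondeg_Z:
  fixes B :: "'n::finite \<Rightarrow> 'n \<Rightarrow> int"
  assumes sym: "symmetric_form B" and sign: "has_signature B 3 (CARD('n) - 3)"
    and n3: "CARD('n) \<ge> 3"
    and rad: "\<forall>z. bil B x z = 0"
  shows "x = 0"
proof -
  have col: "(\<Sum>i\<in>UNIV. x$i * B i j) = 0" for j
  proof -
    have "bil B x (axis j 1) = (\<Sum>i\<in>UNIV. x$i * B i j)"
      unfolding bil_def axis_def by (simp add: if_distrib cong: if_cong)
    then show ?thesis using rad by simp
  qed
  have "\<forall>y. bilR B (to_real x) y = 0"
  proof
    fix y
    have "bilR B (to_real x) y = (\<Sum>j\<in>UNIV. real_of_int (\<Sum>i\<in>UNIV. x$i * B i j) * y$j)"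
      unfolding bilR_def to_real_def by (subst sum.swap) (simp add: sum_distrib_right)
    then show "bilR B (to_real x) y = 0" using col by simp
  qed
  then have "to_real x = 0" using nondeg_R[OF sym sign n3] by blast
  then show ?thesis by (rule to_real_inj)
qed

lemma to_real_axis: "to_real (axis i (1::int)) = axis i (1::real)"
  unfolding to_real_def axis_def by (simp add: vec_eq_iff)

lemma span_all_axes:
  fixes T :: "(real^'n) set"
  assumes "\<And>i. axis i 1 \<in> span T"
  shows "x \<in> span T"
proof -
  have "x = (\<Sum>i\<in>UNIV. (x$i) *s axis i 1)" by (simp add: basis_expansion)
  also have "\<dots> \<in> span T" using assms by (intro span_sum) (simp add: scalar_mult_eq_scaleR span_scale)
  finally show ?thesis .
qed

lemma ext_orth:
  fixes B :: "'n::finite \<Rightarrow> 'n \<Rightarrow> int" and E :: "(int^'n) set"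
  assumes sym: "symmetric_form B" and sign: "has_signature B 3 (CARD('n) - 3)"
    and n3: "CARD('n) \<ge> 3" and fin: "finite E"
    and nz: "\<forall>e\<in>E. qf B e \<noteq> 0"
    and orth: "\<forall>e\<in>E. \<forall>e'\<in>E. e \<noteq> e' \<longrightarrow> bil B e e' = 0"
    and cardE: "card E < CARD('n)"
  shows "\<exists>y. (\<forall>e\<in>E. bil B e y = 0) \<and> qf B y \<noteq> 0"
proof (rule ccontr)
  assume H: "\<not> ?thesis"
  then have H': "\<And>y. (\<forall>e\<in>E. bil B e y = 0) \<Longrightarrow> qf B y = 0" by blast
  define c where "c = (\<Prod>e\<in>E. qf B e)"
  have c0: "c \<noteq> 0" using nz fin by (simp add: c_def)
  define cf where "cf e = c div qf B e" for e
  have cf: "cf e * qf B e = c" if "e \<in> E" for e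
  proof -
    have "qf B e dvd c" unfolding c_def using fin that by (rule dvd_prodI)
    then show ?thesis unfolding cf_def by simp
  qed
  define S where "S y = (\<Sum>e\<in>E. (bil B e y * cf e) *s e)" for y
  define pr where "pr y = c *s y - S y" for y
  have bilS: "bil B e0 (S y) = bil B e0 y * c" if "e0 \<in> E" for e0 y
  proof -
    have "bil B e0 (S y) = (\<Sum>e\<in>E. (bil B e y * cf e) * bil B e0 e)" unfolding S_def by (rule bil_sum2)
    also have "\<dots> = (bil B e0 y * cf e0) * bil B e0 e0 + (\<Sum>e\<in>E - {e0}. (bil B e y * cf e) * bil B e0 e)"
      using fin that by (simp add: sum.remove)
    also have "(\<Sum>e\<in>E - {e0}. (bil B e y * cf e) * bil B e0 e) = 0"
      using orth that by (intro sum.neutral) auto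
    finally show ?thesis using cf[OF that] by (simp add: qf_def algebra_simps)
  qed
  have orth_pr: "bil B e0 (pr y) = 0" if "e0 \<in> E" for e0 y
    unfolding pr_def using bilS[OF that] by (simp add: bil_diff2 bil_smult2 mult.commute)
  have q0: "qf B (pr y) = 0" for y using H' orth_pr by blast
  have S_add: "S (y1 + y2) = S y1 + S y2" for y1 y2
    unfolding S_def by (simp add: bil_add2 algebra_simps vector_sadd_rdistrib sum.distrib)
  have pr_add: "pr (y1 + y2) = pr y1 + pr y2" for y1 y2
    unfolding pr_def S_add by (simp add: vector_add_ldistrib algebra_simps)
  have b0: "bil B (pr y1) (pr y2) = 0" for y1 y2
  proof -
    have "0 = qf B (pr y1 + pr y2)" using q0[of "y1 + y2"] pr_add by simp
    also have "\<dots> = qf B (pr y1) + 2 * bil B (pr y1) (pr y2) + qf B (pr y2)"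
      unfolding qf_def using bil_sym[OF sym, of "pr y2" "pr y1"] by (simp add: bil_add1 bil_add2)
    finally show ?thesis using q0 by simp
  qed
  have b1: "bil B (pr y) z = 0" for y z
  proof -
    have cz: "c *s z = pr z + S z" unfolding pr_def by simp
    have "bil B (pr y) (S z) = (\<Sum>e\<in>E. (bil B e z * cf e) * bil B (pr y) e)" unfolding S_def by (rule bil_sum2)
    also have "\<dots> = 0" using orth_pr bil_sym[OF sym] by (intro sum.neutral) auto
    finally have "bil B (pr y) (S z) = 0" .
    then have "c * bil B (pr y) z = 0" using b0 cz by (metis bil_add2 bil_smult2 add_0)
    then show ?thesis using c0 by simp
  qed
  have pr0: "pr y = 0" for y using nondeg_Z[OF sym sign n3] b1 by blast
  define T where "T = to_real ` E"
  have inT: "to_real y \<in> span T" for y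
  proof -
    have "c *s y = S y" using pr0[of y] unfolding pr_def by simp
    then have "real_of_int c *\<^sub>R to_real y = to_real (S y)" by (metis to_real_smult)
    also have "\<dots> = (\<Sum>e\<in>E. real_of_int (bil B e y * cf e) *\<^sub>R to_real e)"
      unfolding S_def to_real_sum by (simp add: to_real_smult)
    also have "\<dots> \<in> span T" unfolding T_def by (intro span_sum span_scale span_base) auto
    finally have "real_of_int c *\<^sub>R to_real y \<in> span T" .
    then have "inverse (real_of_int c) *\<^sub>R (real_of_int c *\<^sub>R to_real y) \<in> span T" by (rule span_scale)
    then show ?thesis using c0 by simp
  qed
  have "axis i 1 \<in> span T" for i using inT[of "axis i 1"] by (simp add: to_real_axis)
  then have "UNIV \<subseteq> span T" using span_all_axes by blast
  then have "dim (UNIV :: (real^'n) set) \<le> card T" using fin unfolding T_def by (intro dim_le_card) auto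
  moreover have "card T \<le> card E" unfolding T_def using fin by (rule card_image_le)
  ultimately show False using cardE by simp
qed

lemma floor_lim: "(\<lambda>k. real_of_int \<lfloor>real k * t\<rfloor> / real k) \<longlonglongrightarrow> t"
proof (rule tendsto_sandwich[where f = "\<lambda>k. t - 1 / real k" and h = "\<lambda>k. t"])
  show "\<forall>\<^sub>F k in sequentially. t - 1 / real k \<le> real_of_int \<lfloor>real k * t\<rfloor> / real k"
  proof (rule eventually_sequentiallyI[of 1])
    fix k :: nat assume "1 \<le> k"
    then have k: "real k > 0" by simp
    have le: "real k * t - 1 \<le> real_of_int \<lfloor>real k * t\<rfloor>" by linarith
    have "t - 1 / real k = (real k * t - 1) / real k" using k by (simp add: field_simps)
    also have "\<dots> \<le> real_of_int \<lfloor>real k * t\<rfloor> / real k" using le k by (intro divide_right_mono) auto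
    finally show "t - 1 / real k \<le> real_of_int \<lfloor>real k * t\<rfloor> / real k" .
  qed
  show "\<forall>\<^sub>F k in sequentially. real_of_int \<lfloor>real k * t\<rfloor> / real k \<le> t"
  proof (rule eventually_sequentiallyI[of 1])
    fix k :: nat assume "1 \<le> k"
    then have k: "real k > 0" by simp
    have "real_of_int \<lfloor>real k * t\<rfloor> \<le> real k * t" by linarith
    then show "real_of_int \<lfloor>real k * t\<rfloor> / real k \<le> t" using k by (simp add: field_simps)
  qed
  show "(\<lambda>k. t - 1 / real k) \<longlonglongrightarrow> t" using tendsto_diff[OF tendsto_const lim_1_over_n, of t] by simp
  show "(\<lambda>k. t) \<longlonglongrightarrow> t" by simp
qed

lemma exists_neg:
  fixes B :: "'n::finite \<Rightarrow> 'n \<Rightarrow> int"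
  assumes sign: "has_signature B 3 (CARD('n) - 3)" and n4: "CARD('n) \<ge> 4"
  shows "\<exists>w. qf B w < 0"
proof (rule ccontr)
  assume "\<not> ?thesis"
  then have pos: "\<And>w. qf B w \<ge> 0" by (simp add: not_less)
  obtain W :: "(real^'n) set" where W: "subspace W" "dim W = CARD('n) - 3" "\<forall>x\<in>W. x \<noteq> 0 \<longrightarrow> qfR B x < 0"
    using sign unfolding has_signature_def by blast
  have "\<not> W \<subseteq> {0}" using W(2) n4 dim_eq_0[of W] by auto
  then obtain x where x: "x \<in> W" "x \<noteq> 0" by auto
  have qx: "qfR B x < 0" using W(3) x by blast
  define y where "y k = (\<chi> i. \<lfloor>real k * x$i\<rfloor>)" for k :: nat
  define z where "z k = (\<chi> i. real_of_int \<lfloor>real k * x$i\<rfloor> / real k)" for k :: nat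
  have zq: "qfR B (z k) = real_of_int (qf B (y k)) / (real k)\<^sup>2" for k
    unfolding qfR_def qf_def bil_def z_def y_def
    by (simp add: sum_divide_distrib power2_eq_square)
  have zpos: "qfR B (z k) \<ge> 0" for k unfolding zq using pos[of "y k"] by simp
  have lim_i: "(\<lambda>k. z k $ i) \<longlonglongrightarrow> x$i" for i unfolding z_def using floor_lim by simp
  have "(\<lambda>k. qfR B (z k)) \<longlonglongrightarrow> qfR B x"
    unfolding qfR_def by (intro tendsto_sum tendsto_mult tendsto_const lim_i)
  then have "0 \<le> qfR B x" by (rule LIMSEQ_le_const) (use zpos in blast)
  then show False using qx by simp
qed

lemma card3_le: "card {a, b, c} \<le> 3"
  by (simp add: card_insert_if)
lemma card2_le: "card {a, b} \<le> 2"
  by (simp add: card_insert_if)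

lemma ternary:
  fixes B :: "'n::finite \<Rightarrow> 'n \<Rightarrow> int"
  assumes sym: "symmetric_form B" and sign: "has_signature B 3 (CARD('n) - 3)"
    and n6: "CARD('n) \<ge> 6" and hpos: "qf B h > 0"
  shows "\<exists>w1 w2 w3. bil B h w1 = 0 \<and> bil B h w2 = 0 \<and> bil B h w3 = 0 \<and> bil B w1 w2 = 0
     \<and> bil B w1 w3 = 0 \<and> bil B w2 w3 = 0 \<and> qf B w1 < 0 \<and> qf B w2 \<noteq> 0 \<and> qf B w3 \<noteq> 0"
proof -
  have n3: "CARD('n) \<ge> 3" and n4: "CARD('n) \<ge> 4" using n6 by auto
  obtain w where w: "qf B w < 0" using exists_neg[OF sign n4] by blast
  define A where "A = qf B h"
  define b where "b = bil B h w"
  define w1 where "w1 = A *s w + (- b) *s h"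
  have hw1: "bil B h w1 = 0" unfolding w1_def A_def b_def qf_def
    by (simp add: bil_add2 bil_smult2)
  have "qf B w1 = A\<^sup>2 * qf B w + 2 * A * (- b) * bil B w h + (- b)\<^sup>2 * qf B h"
    unfolding w1_def by (rule qf_comb[OF sym])
  also have "\<dots> = A * (A * qf B w) - A * b\<^sup>2"
    using bil_sym[OF sym, of w h] unfolding A_def b_def by (simp add: power2_eq_square algebra_simps)
  finally have qw1e: "qf B w1 = A * (A * qf B w) - A * b\<^sup>2" .
  have A0: "A > 0" using hpos A_def by simp
  have "A * qf B w < 0" using A0 w by (simp add: mult_pos_neg)
  then have "A * (A * qf B w) < 0" using A0 by (simp add: mult_pos_neg)
  moreover have "A * b\<^sup>2 \<ge> 0" using A0 by simp
  ultimately have qw1: "qf B w1 < 0" using qw1e by simp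
  define E1 where "E1 = {h, w1}"
  have "\<exists>y. (\<forall>e\<in>E1. bil B e y = 0) \<and> qf B y \<noteq> 0"
  proof (rule ext_orth[OF sym sign n3])
    show "finite E1" unfolding E1_def by simp
    show "\<forall>e\<in>E1. qf B e \<noteq> 0" unfolding E1_def using hpos qw1 by auto
    show "\<forall>e\<in>E1. \<forall>e'\<in>E1. e \<noteq> e' \<longrightarrow> bil B e e' = 0" unfolding E1_def
      using hw1 bil_sym[OF sym, of h w1] by auto
    show "card E1 < CARD('n)" unfolding E1_def using card2_le[of h w1] n6 by linarith
  qed
  then obtain w2 where w2: "bil B h w2 = 0" "bil B w1 w2 = 0" "qf B w2 \<noteq> 0" unfolding E1_def by auto
  define E2 where "E2 = {h, w1, w2}"
  have "\<exists>y. (\<forall>e\<in>E2. bil B e y = 0) \<and> qf B y \<noteq> 0"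
  proof (rule ext_orth[OF sym sign n3])
    show "finite E2" unfolding E2_def by simp
    show "\<forall>e\<in>E2. qf B e \<noteq> 0" unfolding E2_def using hpos qw1 w2 by auto
    show "\<forall>e\<in>E2. \<forall>e'\<in>E2. e \<noteq> e' \<longrightarrow> bil B e e' = 0" unfolding E2_def
      using hw1 w2 bil_sym[OF sym, of h w1] bil_sym[OF sym, of h w2] bil_sym[OF sym, of w1 w2] by auto
    show "card E2 < CARD('n)" unfolding E2_def using card3_le[of h w1 w2] n6 by linarith
  qed
  then obtain w3 where w3: "bil B h w3 = 0" "bil B w1 w3 = 0" "bil B w2 w3 = 0" "qf B w3 \<noteq> 0"
    unfolding E2_def by auto
  show ?thesis using hw1 w2 w3 qw1 by blast
qed



lemma prim_decomp:
  fixes v :: "int^'n::finite"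
  assumes v0: "v \<noteq> 0"
  shows "\<exists>g u. g \<noteq> 0 \<and> v = g *s u \<and> primitive_vec u"
proof -
  define g where "g = Gcd (range (\<lambda>i. v$i))"
  have gd: "g dvd v$i" for i unfolding g_def by (rule Gcd_dvd) simp
  have g0: "g \<noteq> 0"
  proof
    assume "g = 0"
    then have "range (\<lambda>i. v$i) \<subseteq> {0}" unfolding g_def by simp
    then have "v = 0" by (auto simp: vec_eq_iff)
    then show False using v0 by simp
  qed
  define u where "u = (\<chi> i. v$i div g)"
  have vu: "v = g *s u" unfolding u_def using gd by (simp add: vec_eq_iff)
  have "primitive_vec u" unfolding primitive_vec_def
  proof (intro allI impI)
    fix k :: int and x assume ux: "u = k *s x"
    have "g * k dvd v$i" for i using vu ux by (simp add: mult.assoc)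
    then have "g * k dvd g" unfolding g_def by (intro Gcd_greatest) auto
    then have "g * k dvd g * 1" by simp
    then have "k dvd 1" using g0 by (simp only: dvd_mult_cancel_left) simp
    then show "\<bar>k\<bar> = 1" by simp
  qed
  then show ?thesis using g0 vu by blast
qed

definition Mset :: "int^'n \<Rightarrow> int^'n \<Rightarrow> (int^'n) set" where
  "Mset h v = {x. \<exists>f a b. f \<noteq> 0 \<and> f *s x = a *s h + b *s v}"

lemma Mset_mem: "x \<in> Mset h v \<longleftrightarrow> (\<exists>f a b. f \<noteq> 0 \<and> (\<forall>i. f * x$i = a * h$i + b * v$i))"
  unfolding Mset_def by (simp add: vec_eq_iff)

lemma M_h: "h \<in> Mset h v"
  unfolding Mset_mem by (rule exI[of _ 1], rule exI[of _ 1], rule exI[of _ 0]) simp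
lemma M_v: "v \<in> Mset h v"
  unfolding Mset_mem by (rule exI[of _ 1], rule exI[of _ 0], rule exI[of _ 1]) simp

lemma M_prim: "primitive_sublattice (Mset h v)"
  unfolding primitive_sublattice_def sublattice_def
proof (intro conjI ballI allI impI)
  show "0 \<in> Mset h v"
    unfolding Mset_mem by (rule exI[of _ 1], rule exI[of _ 0], rule exI[of _ 0]) simp
next
  fix x y assume "x \<in> Mset h v" "y \<in> Mset h v"
  then obtain f1 a1 b1 f2 a2 b2 where f1: "f1 \<noteq> 0" "\<And>i. f1 * x$i = a1 * h$i + b1 * v$i"
    and f2: "f2 \<noteq> 0" "\<And>i. f2 * y$i = a2 * h$i + b2 * v$i" unfolding Mset_mem by blast
  have e1: "(f1 * f2) * (x + y)$i = (f2 * a1 + f1 * a2) * h$i + (f2 * b1 + f1 * b2) * v$i" for i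
  proof -
    have "(f1 * f2) * (x + y)$i = f2 * (f1 * x$i) + f1 * (f2 * y$i)" by (simp add: algebra_simps)
    also have "\<dots> = f2 * (a1 * h$i + b1 * v$i) + f1 * (a2 * h$i + b2 * v$i)" by (simp only: f1 f2)
    finally show ?thesis by (simp add: algebra_simps)
  qed
  have e2: "(f1 * f2) * (x - y)$i = (f2 * a1 - f1 * a2) * h$i + (f2 * b1 - f1 * b2) * v$i" for i
  proof -
    have "(f1 * f2) * (x - y)$i = f2 * (f1 * x$i) - f1 * (f2 * y$i)" by (simp add: algebra_simps)
    also have "\<dots> = f2 * (a1 * h$i + b1 * v$i) - f1 * (a2 * h$i + b2 * v$i)" by (simp only: f1 f2)
    finally show ?thesis by (simp add: algebra_simps)
  qed
  have nz: "f1 * f2 \<noteq> 0" using f1 f2 by simp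
  show "x + y \<in> Mset h v" unfolding Mset_mem using nz e1 by blast
  show "x - y \<in> Mset h v" unfolding Mset_mem using nz e2 by blast
next
  fix k :: int and x assume k: "k \<noteq> 0" and "k *s x \<in> Mset h v"
  then obtain f a b where f: "f \<noteq> 0" "\<And>i. f * (k *s x)$i = a * h$i + b * v$i" unfolding Mset_mem by blast
  have "(f * k) * x$i = a * h$i + b * v$i" for i using f(2)[of i] by (simp add: mult.assoc)
  moreover have "f * k \<noteq> 0" using f k by simp
  ultimately show "x \<in> Mset h v" unfolding Mset_mem by blast
qed

lemma M_rep:
  fixes B :: "'n::finite \<Rightarrow> 'n \<Rightarrow> int"
  assumes sym: "symmetric_form B" and hv: "bil B h v = 0" and x: "x \<in> Mset h v"
  shows "\<exists>f a b. f \<noteq> 0 \<and> f\<^sup>2 * qf B x = a\<^sup>2 * qf B h + b\<^sup>2 * qf B v \<and> (a = 0 \<and> b = 0 \<longrightarrow> x = 0)"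
proof -
  obtain f a b where f: "f \<noteq> 0" "f *s x = a *s h + b *s v" using x unfolding Mset_def by blast
  have "f\<^sup>2 * qf B x = qf B (f *s x)" unfolding qf_def by (simp add: bil_smult1 bil_smult2 power2_eq_square)
  also have "\<dots> = a\<^sup>2 * qf B h + b\<^sup>2 * qf B v" unfolding f(2) qf_comb[OF sym] hv by simp
  finally have e: "f\<^sup>2 * qf B x = a\<^sup>2 * qf B h + b\<^sup>2 * qf B v" .
  have "a = 0 \<and> b = 0 \<longrightarrow> x = 0"
  proof
    assume "a = 0 \<and> b = 0"
    then have "f *s x = 0" using f(2) by simp
    then show "x = 0" using f(1) by (simp add: vec_eq_iff)
  qed
  then show ?thesis using f(1) e by blast
qed

lemma M_orth:
  fixes B :: "'n::finite \<Rightarrow> 'n \<Rightarrow> int"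
  assumes sym: "symmetric_form B" and hv: "bil B h v = 0" and hq: "qf B h \<noteq> 0"
    and pv: "primitive_vec v"
  shows "Mset h v \<inter> orth_compl B h = {k *s v | k. True}"
proof
  show "{k *s v | k. True} \<subseteq> Mset h v \<inter> orth_compl B h"
  proof
    fix y assume "y \<in> {k *s v | k. True}"
    then obtain k where y: "y = k *s v" by blast
    have "y \<in> Mset h v" unfolding Mset_def y
      by (rule CollectI, rule exI[of _ 1], rule exI[of _ 0], rule exI[of _ k]) simp
    moreover have "y \<in> orth_compl B h" unfolding orth_compl_def y using hv by (simp add: bil_smult2)
    ultimately show "y \<in> Mset h v \<inter> orth_compl B h" by blast
  qed
next
  show "Mset h v \<inter> orth_compl B h \<subseteq> {k *s v | k. True}"
  proof
    fix x assume "x \<in> Mset h v \<inter> orth_compl B h"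
    then obtain f a b where f: "f \<noteq> 0" "f *s x = a *s h + b *s v" and hx: "bil B h x = 0"
      unfolding Mset_def orth_compl_def by blast
    have "bil B h (f *s x) = a * qf B h" unfolding f(2) qf_def using hv by (simp add: bil_add2 bil_smult2)
    then have "a * qf B h = 0" using hx by (simp add: bil_smult2)
    then have a0: "a = 0" using hq by simp
    have fx: "f * x$i = b * v$i" for i using f(2) a0 by (simp add: vec_eq_iff)
    define d where "d = gcd f b"
    have gz: "d \<noteq> 0" unfolding d_def using f(1) by simp
    then obtain f' b' where fb: "f = f' * d" "b = b' * d" "coprime f' b'"
      unfolding d_def using gcd_coprime_exists by blast
    have fx': "f' * x$i = b' * v$i" for i
    proof -
      have "d * (f' * x$i) = d * (b' * v$i)" using fx[of i] unfolding fb(1,2) by (simp add: algebra_simps)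
      then show ?thesis using gz by simp
    qed
    have dv: "f' dvd v$i" for i
    proof -
      have "f' dvd f' * x$i" by simp
      then have "f' dvd b' * v$i" unfolding fx' .
      then show ?thesis using fb(3) by (simp add: coprime_dvd_mult_right_iff)
    qed
    define u where "u = (\<chi> i. v$i div f')"
    have "v = f' *s u" unfolding u_def using dv by (simp add: vec_eq_iff)
    then have f1: "\<bar>f'\<bar> = 1" using pv unfolding primitive_vec_def by blast
    have "f' * f' = \<bar>f'\<bar> * \<bar>f'\<bar>" by (simp only: abs_mult_self_eq)
    then have ff: "f' * f' = 1" using f1 by simp
    have "x$i = (f' * b') * v$i" for i
    proof -
      have "x$i = (f' * f') * x$i" using ff by simp
      also have "\<dots> = f' * (b' * v$i)" using fx'[of i] by (simp add: mult.assoc)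
      finally show ?thesis by (simp add: mult.assoc)
    qed
    then have "x = (f' * b') *s v" by (simp add: vec_eq_iff)
    then show "x \<in> {k *s v | k. True}" by blast
  qed
qed

lemma M_rank:
  fixes B :: "'n::finite \<Rightarrow> 'n \<Rightarrow> int"
  assumes sym: "symmetric_form B" and hv: "bil B h v = 0" and hq: "qf B h > 0" and v0: "v \<noteq> 0"
  shows "lattice_rank (Mset h v) = 2"
proof -
  define hR vR where "hR = to_real h" and "vR = to_real v"
  have sub: "to_real ` Mset h v \<subseteq> span {hR, vR}"
  proof
    fix y assume "y \<in> to_real ` Mset h v"
    then obtain x f a b where y: "y = to_real x" and f: "f \<noteq> 0" "f *s x = a *s h + b *s v"
      unfolding Mset_def by blast
    have "real_of_int f *\<^sub>R y = real_of_int a *\<^sub>R hR + real_of_int b *\<^sub>R vR"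
    proof -
      have "to_real (f *s x) = to_real (a *s h + b *s v)" using f(2) by simp
      then show ?thesis unfolding y hR_def vR_def by (simp add: to_real_add to_real_smult)
    qed
    then have "inverse (real_of_int f) *\<^sub>R (real_of_int f *\<^sub>R y) = inverse (real_of_int f) *\<^sub>R (real_of_int a *\<^sub>R hR + real_of_int b *\<^sub>R vR)"
      by simp
    then have "y = inverse (real_of_int f) *\<^sub>R (real_of_int a *\<^sub>R hR + real_of_int b *\<^sub>R vR)"
      using f(1) by simp
    also have "\<dots> \<in> span {hR, vR}" by (intro span_scale span_add span_base) auto
    finally show "y \<in> span {hR, vR}" .
  qed
  have sup: "{hR, vR} \<subseteq> to_real ` Mset h v" unfolding hR_def vR_def using M_h M_v by blast
  have sp: "span (to_real ` Mset h v) = span {hR, vR}"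
  proof
    have "span (to_real ` Mset h v) \<subseteq> span (span {hR, vR})" using sub by (rule span_mono)
    then show "span (to_real ` Mset h v) \<subseteq> span {hR, vR}" by (simp only: span_span)
    show "span {hR, vR} \<subseteq> span (to_real ` Mset h v)" using sup by (rule span_mono)
  qed
  have vR0: "vR \<noteq> 0" unfolding vR_def using v0 to_real_inj by blast
  have d1: "dim {vR} = 1" using vR0 by (simp add: dim_insert)
  have "hR \<notin> span {vR}"
  proof
    assume "hR \<in> span {vR}"
    then obtain k where k: "hR = k *\<^sub>R vR" by (auto simp: span_singleton)
    have "bilR B hR hR = k * bilR B vR hR" by (subst (1) k) (simp add: bilR_scale1)
    also have "bilR B vR hR = 0" unfolding hR_def vR_def bilR_to_real using hv bil_sym[OF sym, of v h] by simp
    finally have "bilR B hR hR = 0" by simp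
    moreover have "bilR B hR hR = real_of_int (qf B h)" unfolding hR_def vR_def bilR_to_real qf_def by simp
    ultimately show False using hq by simp
  qed
  then have "dim {hR, vR} = 2" using d1 by (simp add: dim_insert)
  moreover have "dim (to_real ` Mset h v) = dim {hR, vR}"
    using sp by (metis dim_span)
  ultimately show ?thesis unfolding lattice_rank_def by simp
qed



lemma crt_Qt:
  fixes S :: "nat set" and a1 a2 a3 :: int and tx ty tz :: "nat \<Rightarrow> int"
  assumes fin: "finite S" and pr: "\<forall>p\<in>S. prime p" and a1: "a1 < 0"
    and good: "\<forall>p\<in>S. int p dvd a1 * (tx p)\<^sup>2 + a2 * (ty p)\<^sup>2 + a3 * (tz p)\<^sup>2
         \<and> \<not> (int p)\<^sup>2 dvd a1 * (tx p)\<^sup>2 + a2 * (ty p)\<^sup>2 + a3 * (tz p)\<^sup>2"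
  shows "\<exists>x y z. (\<forall>p\<in>S. int p dvd a1 * x\<^sup>2 + a2 * y\<^sup>2 + a3 * z\<^sup>2
         \<and> \<not> (int p)\<^sup>2 dvd a1 * x\<^sup>2 + a2 * y\<^sup>2 + a3 * z\<^sup>2) \<and> a1 * x\<^sup>2 + a2 * y\<^sup>2 + a3 * z\<^sup>2 < 0"
proof -
  obtain X0 where X0: "\<forall>p\<in>S. [X0 = tx p] (mod int (p\<^sup>2))" using crt_int[OF fin pr] by blast
  obtain Y where Y: "\<forall>p\<in>S. [Y = ty p] (mod int (p\<^sup>2))" using crt_int[OF fin pr] by blast
  obtain Z where Z: "\<forall>p\<in>S. [Z = tz p] (mod int (p\<^sup>2))" using crt_int[OF fin pr] by blast
  define R where "R = (\<Prod>p\<in>S. int (p\<^sup>2))"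
  have R1: "R \<ge> 1"
  proof -
    have "R > 0" unfolding R_def using pr by (intro prod_pos) (auto simp: prime_gt_0_nat)
    then show ?thesis by simp
  qed
  define c where "c = \<bar>a2 * Y\<^sup>2 + a3 * Z\<^sup>2\<bar>"
  define s where "s = \<bar>X0\<bar> + c + 1"
  define X where "X = X0 + R * s"
  have s1: "s \<ge> 1" unfolding s_def c_def by simp
  have "R * s \<ge> 1 * s" using R1 s1 by (intro mult_right_mono) auto
  then have "R * s \<ge> s" by simp
  then have Xc: "X \<ge> c + 1" unfolding X_def s_def by simp
  have X1: "X \<ge> 1" using Xc c_def by simp
  have XX: "X\<^sup>2 \<ge> X" using X1 by (simp add: power2_eq_square)
  have "a1 * X\<^sup>2 \<le> - (X\<^sup>2)"
  proof -
    have "a1 \<le> -1" using a1 by simp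
    then have "a1 * X\<^sup>2 \<le> (-1) * X\<^sup>2" by (intro mult_right_mono) simp_all
    then show ?thesis by simp
  qed
  moreover have "a2 * Y\<^sup>2 + a3 * Z\<^sup>2 \<le> c" unfolding c_def by simp
  ultimately have neg: "a1 * X\<^sup>2 + a2 * Y\<^sup>2 + a3 * Z\<^sup>2 < 0" using XX Xc by linarith
  have "int p dvd a1 * X\<^sup>2 + a2 * Y\<^sup>2 + a3 * Z\<^sup>2 \<and> \<not> (int p)\<^sup>2 dvd a1 * X\<^sup>2 + a2 * Y\<^sup>2 + a3 * Z\<^sup>2"
    if pS: "p \<in> S" for p
  proof -
    have Rd: "int (p\<^sup>2) dvd R" unfolding R_def using fin pS by (rule dvd_prodI)
    have "[R * s = 0] (mod int (p\<^sup>2))" using Rd by (simp add: cong_0_iff)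
    then have "[X0 + R * s = tx p + 0] (mod int (p\<^sup>2))" using X0 pS by (intro cong_add) auto
    then have cX: "[X = tx p] (mod int (p\<^sup>2))" unfolding X_def by simp
    have cQ: "[a1 * X\<^sup>2 + a2 * Y\<^sup>2 + a3 * Z\<^sup>2 = a1 * (tx p)\<^sup>2 + a2 * (ty p)\<^sup>2 + a3 * (tz p)\<^sup>2] (mod int (p\<^sup>2))"
      using cX Y Z pS by (intro cong_add cong_mult cong_refl cong_pow) auto
    define Q where "Q = a1 * X\<^sup>2 + a2 * Y\<^sup>2 + a3 * Z\<^sup>2"
    define Qp where "Qp = a1 * (tx p)\<^sup>2 + a2 * (ty p)\<^sup>2 + a3 * (tz p)\<^sup>2"
    have d: "(int p)\<^sup>2 dvd Q - Qp" using cQ unfolding Q_def Qp_def by (simp add: cong_iff_dvd_diff)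
    have g: "int p dvd Qp" "\<not> (int p)\<^sup>2 dvd Qp" using good pS unfolding Qp_def by auto
    have "int p dvd (int p)\<^sup>2" by (simp add: power2_eq_square)
    then have "int p dvd Q - Qp" using d by (rule dvd_trans)
    then have "int p dvd (Q - Qp) + Qp" using g(1) by (rule dvd_add)
    then have p1: "int p dvd Q" by simp
    have p2: "\<not> (int p)\<^sup>2 dvd Q"
    proof
      assume "(int p)\<^sup>2 dvd Q"
      then have "(int p)\<^sup>2 dvd Q - (Q - Qp)" using d by (rule dvd_diff)
      then show False using g(2) by simp
    qed
    show ?thesis using p1 p2 unfolding Q_def by blast
  qed
  then show ?thesis using neg by blast
qed

lemma not_dvd_small:
  fixes p :: nat and a K :: int
  assumes "a \<noteq> 0" "\<bar>a\<bar> \<le> K" "int p > K"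
  shows "\<not> int p dvd a"
proof
  assume "int p dvd a"
  then have "\<bar>int p\<bar> \<le> \<bar>a\<bar>" using assms(1) by (intro dvd_imp_le_int)
  then show False using assms by simp
qed

lemma abs_le_mult:
  fixes x y :: int
  assumes "y \<noteq> 0"
  shows "\<bar>x\<bar> \<le> \<bar>x * y\<bar>"
proof -
  have "\<bar>y\<bar> \<ge> 1" using assms by simp
  then have "\<bar>x\<bar> * 1 \<le> \<bar>x\<bar> * \<bar>y\<bar>" by (intro mult_left_mono) simp_all
  then show ?thesis by (simp add: abs_mult)
qed

lemma per_j:
  fixes B :: "'n::finite \<Rightarrow> 'n \<Rightarrow> int"
    and h :: "int^'n" and MBM :: "(int^'n) set" and N :: int and j :: nat
  assumes b2: "CARD('n) \<ge> 6"
    and sym: "symmetric_form B"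
    and sign: "has_signature B 3 (CARD('n) - 3)"
    and h_pos: "qf B h > 0"
    and N_pos: "N > 0"
    and MBM_bound: "\<forall>v\<in>MBM. - N \<le> qf B v \<and> qf B v < 0"
  shows "\<exists>M v. primitive_sublattice M \<and> lattice_rank M = 2 \<and> anisotropic B M
                \<and> h \<in> M
                \<and> M \<inter> orth_compl B h = {k *s v | k. True}
                \<and> primitive_vec v
                \<and> M \<inter> MBM = {} \<and> qf B v \<le> - int j"
proof -
  obtain w1 w2 w3 where W: "bil B h w1 = 0" "bil B h w2 = 0" "bil B h w3 = 0" "bil B w1 w2 = 0"
     "bil B w1 w3 = 0" "bil B w2 w3 = 0" "qf B w1 < 0" "qf B w2 \<noteq> 0" "qf B w3 \<noteq> 0"
    using ternary[OF sym sign b2 h_pos] by blast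
  define A where "A = qf B h"
  define a1 where "a1 = qf B w1"
  define a2 where "a2 = qf B w2"
  define a3 where "a3 = qf B w3"
  have A0: "A > 0" using h_pos A_def by simp
  have a10: "a1 \<noteq> 0" "a1 < 0" and a20: "a2 \<noteq> 0" and a30: "a3 \<noteq> 0"
    using W unfolding a1_def a2_def a3_def by auto
  define K where "K = \<bar>a1 * a2 * a3\<bar>"
  define bnd :: nat where "bnd = j + nat N + nat K + 2"
  have ex: "\<forall>m\<in>{1..N}. \<exists>p. \<exists>c. prime p \<and> p > bnd \<and> p mod 4 = 3 \<and> int p dvd m * A * c\<^sup>2 - 1"
  proof
    fix m assume "m \<in> {1..N}"
    then have "m * A > 0" using A0 by simp
    then show "\<exists>p. \<exists>c. prime p \<and> p > bnd \<and> p mod 4 = 3 \<and> int p dvd m * A * c\<^sup>2 - 1"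
      using prime_3mod4_exists[of "m * A" bnd] by blast
  qed
  obtain Pf where Pf: "\<forall>m\<in>{1..N}. \<exists>c. prime (Pf m) \<and> Pf m > bnd \<and> Pf m mod 4 = 3 \<and> int (Pf m) dvd m * A * c\<^sup>2 - 1"
    using bchoice[OF ex] by blast
  define S where "S = Pf ` {1..N}"
  have finS: "finite S" unfolding S_def by simp
  have prS: "\<forall>p\<in>S. prime p" unfolding S_def using Pf by blast
  have bigS: "\<forall>p\<in>S. p > bnd" unfolding S_def using Pf by blast
  have K1: "\<bar>a1\<bar> \<le> K" "\<bar>a2\<bar> \<le> K" "\<bar>a3\<bar> \<le> K"
  proof -
    have "\<bar>a1\<bar> \<le> \<bar>a1 * (a2 * a3)\<bar>" using a20 a30 by (intro abs_le_mult) simp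
    moreover have "\<bar>a2\<bar> \<le> \<bar>a2 * (a1 * a3)\<bar>" using a10 a30 by (intro abs_le_mult) simp
    moreover have "\<bar>a3\<bar> \<le> \<bar>a3 * (a1 * a2)\<bar>" using a10 a20 by (intro abs_le_mult) simp
    ultimately show "\<bar>a1\<bar> \<le> K" "\<bar>a2\<bar> \<le> K" "\<bar>a3\<bar> \<le> K" unfolding K_def
      by (simp_all add: ac_simps)
  qed
  have ndiv: "\<not> int p dvd a1" "\<not> int p dvd a2" "\<not> int p dvd a3" "p > 2" if pS: "p \<in> S" for p
  proof -
    have "p > bnd" using bigS pS by blast
    then have pK: "int p > K" and p2: "p > 2" unfolding bnd_def by auto
    show "\<not> int p dvd a1" using not_dvd_small[OF a10(1) K1(1) pK] .
    show "\<not> int p dvd a2" using not_dvd_small[OF a20 K1(2) pK] .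
    show "\<not> int p dvd a3" using not_dvd_small[OF a30 K1(3) pK] .
    show "p > 2" by (rule p2)
  qed
  have hen: "\<forall>p\<in>S. \<exists>t. int p dvd a1 * (fst t)\<^sup>2 + a2 * (fst (snd t))\<^sup>2 + a3 * (snd (snd t))\<^sup>2
         \<and> \<not> (int p)\<^sup>2 dvd a1 * (fst t)\<^sup>2 + a2 * (fst (snd t))\<^sup>2 + a3 * (snd (snd t))\<^sup>2"
  proof
    fix p assume pS: "p \<in> S"
    obtain x y z where "int p dvd a1 * x\<^sup>2 + a2 * y\<^sup>2 + a3 * z\<^sup>2"
        "\<not> (int p)\<^sup>2 dvd a1 * x\<^sup>2 + a2 * y\<^sup>2 + a3 * z\<^sup>2"
      using hensel3[of p a1 a2 a3] prS pS ndiv[OF pS] by blast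
    then show "\<exists>t. int p dvd a1 * (fst t)\<^sup>2 + a2 * (fst (snd t))\<^sup>2 + a3 * (snd (snd t))\<^sup>2
         \<and> \<not> (int p)\<^sup>2 dvd a1 * (fst t)\<^sup>2 + a2 * (fst (snd t))\<^sup>2 + a3 * (snd (snd t))\<^sup>2"
      by (intro exI[of _ "(x, y, z)"]) simp
  qed
  obtain T where T: "\<forall>p\<in>S. int p dvd a1 * (fst (T p))\<^sup>2 + a2 * (fst (snd (T p)))\<^sup>2 + a3 * (snd (snd (T p)))\<^sup>2
         \<and> \<not> (int p)\<^sup>2 dvd a1 * (fst (T p))\<^sup>2 + a2 * (fst (snd (T p)))\<^sup>2 + a3 * (snd (snd (T p)))\<^sup>2"
    using bchoice[OF hen] by blast
  obtain x y z where xyz: "\<forall>p\<in>S. int p dvd a1 * x\<^sup>2 + a2 * y\<^sup>2 + a3 * z\<^sup>2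
         \<and> \<not> (int p)\<^sup>2 dvd a1 * x\<^sup>2 + a2 * y\<^sup>2 + a3 * z\<^sup>2" and Qneg: "a1 * x\<^sup>2 + a2 * y\<^sup>2 + a3 * z\<^sup>2 < 0"
    using crt_Qt[OF finS prS a10(2) T]
    by blast
  define Q where "Q = a1 * x\<^sup>2 + a2 * y\<^sup>2 + a3 * z\<^sup>2"
  define vr where "vr = x *s w1 + y *s w2 + z *s w3"
  have qvr: "qf B vr = Q" unfolding vr_def Q_def a1_def a2_def a3_def
    using qf_comb3[OF sym W(4) W(5) W(6)] by (simp add: mult.commute)
  have hvr: "bil B h vr = 0" unfolding vr_def using W(1-3) by (simp add: bil_add2 bil_smult2)
  have vr0: "vr \<noteq> 0"
  proof
    assume "vr = 0"
    then have "qf B vr = 0" unfolding qf_def by simp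
    then show False using qvr Qneg Q_def by simp
  qed
  obtain g v where gv: "g \<noteq> 0" "vr = g *s v" "primitive_vec v" using prim_decomp[OF vr0] by blast
  define D where "D = qf B v"
  have qg: "Q = g\<^sup>2 * D" using qvr unfolding gv(2) D_def qf_def
    by (simp add: bil_smult1 bil_smult2 power2_eq_square)
  have hv: "bil B h v = 0" using hvr gv(1) unfolding gv(2) by (simp add: bil_smult2)
  have v0: "v \<noteq> 0" using vr0 gv(2) by auto
  have pD: "int p dvd D \<and> \<not> (int p)\<^sup>2 dvd D" if pS: "p \<in> S" for p
  proof -
    have pp: "prime (int p)" using prS pS by simp
    have d1: "int p dvd g\<^sup>2 * D" and d2: "\<not> (int p)\<^sup>2 dvd g\<^sup>2 * D" using xyz pS qg Q_def by auto
    have ng: "\<not> int p dvd g"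
    proof
      assume "int p dvd g"
      then have "(int p)\<^sup>2 dvd g\<^sup>2" by (simp add: power2_eq_square mult_dvd_mono)
      then have "(int p)\<^sup>2 dvd g\<^sup>2 * D" by simp
      then show False using d2 by simp
    qed
    then have "\<not> int p dvd g\<^sup>2" using pp prime_dvd_power by blast
    then have "int p dvd D" using d1 pp by (simp add: prime_dvd_mult_iff)
    moreover have "\<not> (int p)\<^sup>2 dvd D" using d2 by (metis dvd_mult)
    ultimately show ?thesis by blast
  qed
  have Dneg: "D < 0"
  proof -
    have "g\<^sup>2 > 0" using gv(1) by simp
    moreover have "g\<^sup>2 * D < 0" using qg Qneg Q_def by simp
    ultimately show ?thesis by (simp add: mult_less_0_iff)
  qed
  have N1: "(1::int) \<in> {1..N}" using N_pos by simp
  obtain c1 where P1: "prime (Pf 1)" "Pf 1 > bnd" "Pf 1 mod 4 = 3" "int (Pf 1) dvd 1 * A * c1\<^sup>2 - 1"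
    using Pf N1 by blast
  have P1S: "Pf 1 \<in> S" unfolding S_def using N1 by blast
  have Dj: "D \<le> - int j"
  proof -
    have "int (Pf 1) dvd D" using pD[OF P1S] by blast
    then have "\<bar>int (Pf 1)\<bar> \<le> \<bar>D\<bar>" using Dneg by (intro dvd_imp_le_int) auto
    then have "int (Pf 1) \<le> - D" using Dneg by simp
    moreover have "int (Pf 1) > int j" using P1(2) unfolding bnd_def by simp
    ultimately show ?thesis by simp
  qed
  have nA1: "\<not> int (Pf 1) dvd A"
  proof
    assume "int (Pf 1) dvd A"
    then have "int (Pf 1) dvd 1 * A * c1\<^sup>2" by simp
    then have "int (Pf 1) dvd 1" using P1(4) by (metis dvd_diff_right_iff)
    then show False using P1(1) by simp
  qed
  define M where "M = Mset h v"
  have aniso: "anisotropic B M" unfolding anisotropic_def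
  proof (intro ballI impI)
    fix x assume xM: "x \<in> M" and q0: "qf B x = 0"
    obtain f a b where fab: "f \<noteq> 0" "f\<^sup>2 * qf B x = a\<^sup>2 * qf B h + b\<^sup>2 * qf B v" "a = 0 \<and> b = 0 \<longrightarrow> x = 0"
      using M_rep[OF sym hv] xM unfolding M_def by blast
    have "A * a\<^sup>2 + D * b\<^sup>2 = 0" using fab(2) q0 unfolding A_def D_def by (simp add: mult.commute)
    then have "a = 0 \<and> b = 0" using aniso_descent[OF P1(1) nA1] pD[OF P1S] by blast
    then show "x = 0" using fab(3) by blast
  qed
  have mbm: "M \<inter> MBM = {}"
  proof (rule ccontr)
    assume "M \<inter> MBM \<noteq> {}"
    then obtain x where xM: "x \<in> M" and xB: "x \<in> MBM" by blast
    define m where "m = - qf B x"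
    have mN: "m \<in> {1..N}" using MBM_bound xB unfolding m_def by force
    obtain c where P: "prime (Pf m)" "Pf m mod 4 = 3" "int (Pf m) dvd m * A * c\<^sup>2 - 1"
      using Pf mN by blast
    have PS: "Pf m \<in> S" unfolding S_def using mN by blast
    obtain f a b where fab: "f \<noteq> 0" "f\<^sup>2 * qf B x = a\<^sup>2 * qf B h + b\<^sup>2 * qf B v"
      using M_rep[OF sym hv] xM unfolding M_def by blast
    have "f\<^sup>2 * (- m) = A * a\<^sup>2 + D * b\<^sup>2" using fab(2) unfolding m_def A_def D_def by (simp add: mult.commute)
    then show False using mbm_descent[OF P(1) P(2) P(3)] pD[OF PS] fab(1) by blast
  qed
  show ?thesis
  proof (intro exI conjI)
    show "primitive_sublattice M" unfolding M_def by (rule M_prim)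
    show "lattice_rank M = 2" unfolding M_def using M_rank[OF sym hv h_pos v0] .
    show "anisotropic B M" by (rule aniso)
    show "h \<in> M" unfolding M_def by (rule M_h)
    show "M \<inter> orth_compl B h = {k *s v | k. True}" unfolding M_def
      using M_orth[OF sym hv _ gv(3)] h_pos by simp
    show "primitive_vec v" by (rule gv(3))
    show "M \<inter> MBM = {}" by (rule mbm)
    show "qf B v \<le> - int j" using Dj D_def by simp
  qed
qed
theorem proposition2p6:
  fixes B :: "'n::finite \<Rightarrow> 'n \<Rightarrow> int"
    and h :: "int^'n"
    and MBM :: "(int^'n) set"
    and N :: int
  assumes b2: "CARD('n) \<ge> 6"
    and sym: "symmetric_form B"
    and prim_form: "primitive_form B"
    and sign: "has_signature B 3 (CARD('n) - 3)"
    and h_prim: "primitive_vec h"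
    and h_pos: "qf B h > 0"
    and N_pos: "N > 0"
    and MBM_bound: "\<forall>v\<in>MBM. - N \<le> qf B v \<and> qf B v < 0"
  shows "\<exists>(M :: nat \<Rightarrow> (int^'n) set) (v :: nat \<Rightarrow> int^'n).
           (\<forall>j. primitive_sublattice (M j) \<and> lattice_rank (M j) = 2 \<and> anisotropic B (M j)
                \<and> h \<in> M j
                \<and> M j \<inter> orth_compl B h = {k *s v j | k. True}
                \<and> primitive_vec (v j)
                \<and> M j \<inter> MBM = {})
         \<and> filterlim (\<lambda>j. qf B (v j)) at_bot sequentially"
proof -
  have "\<forall>j. \<exists>Mv. primitive_sublattice (fst Mv) \<and> lattice_rank (fst Mv) = 2 \<and> anisotropic B (fst Mv)
                \<and> h \<in> fst Mv
                \<and> fst Mv \<inter> orth_compl B h = {k *s snd Mv | k. True}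
                \<and> primitive_vec (snd Mv)
                \<and> fst Mv \<inter> MBM = {} \<and> qf B (snd Mv) \<le> - int j"
  proof
    fix j
    obtain M v where "primitive_sublattice M \<and> lattice_rank M = 2 \<and> anisotropic B M
                \<and> h \<in> M
                \<and> M \<inter> orth_compl B h = {k *s v | k. True}
                \<and> primitive_vec v
                \<and> M \<inter> MBM = {} \<and> qf B v \<le> - int j"
      using per_j[OF b2 sym sign h_pos N_pos MBM_bound, of j] by blast
    then show "\<exists>Mv. primitive_sublattice (fst Mv) \<and> lattice_rank (fst Mv) = 2 \<and> anisotropic B (fst Mv)
                \<and> h \<in> fst Mv
                \<and> fst Mv \<inter> orth_compl B h = {k *s snd Mv | k. True}
                \<and> primitive_vec (snd Mv)
                \<and> fst Mv \<inter> MBM = {} \<and> qf B (snd Mv) \<le> - int j"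
      by (intro exI[of _ "(M, v)"]) simp
  qed
  from choice[OF this] obtain F where F: "\<forall>j. primitive_sublattice (fst (F j)) \<and> lattice_rank (fst (F j)) = 2 \<and> anisotropic B (fst (F j))
                \<and> h \<in> fst (F j)
                \<and> fst (F j) \<inter> orth_compl B h = {k *s snd (F j) | k. True}
                \<and> primitive_vec (snd (F j))
                \<and> fst (F j) \<inter> MBM = {} \<and> qf B (snd (F j)) \<le> - int j"
    by blast
  define M where "M j = fst (F j)" for j
  define v where "v j = snd (F j)" for j
  have lim: "filterlim (\<lambda>j. qf B (v j)) at_bot sequentially"
    unfolding filterlim_at_bot
  proof
    fix Z :: int
    show "\<forall>\<^sub>F j in sequentially. qf B (v j) \<le> Z"
    proof (rule eventually_sequentiallyI[of "nat (- Z)"])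
      fix j assume "nat (- Z) \<le> j"
      then have "- int j \<le> Z" by linarith
      moreover have "qf B (v j) \<le> - int j" using spec[OF F, of j] unfolding v_def by (elim conjE)
      ultimately show "qf B (v j) \<le> Z" by linarith
    qed
  qed
  have allj: "\<forall>j. primitive_sublattice (M j) \<and> lattice_rank (M j) = 2 \<and> anisotropic B (M j)
                \<and> h \<in> M j
                \<and> M j \<inter> orth_compl B h = {k *s v j | k. True}
                \<and> primitive_vec (v j)
                \<and> M j \<inter> MBM = {}"
  proof
    fix j
    have Fj: "primitive_sublattice (fst (F j)) \<and> lattice_rank (fst (F j)) = 2 \<and> anisotropic B (fst (F j))
                \<and> h \<in> fst (F j)
                \<and> fst (F j) \<inter> orth_compl B h = {k *s snd (F j) | k. True}
                \<and> primitive_vec (snd (F j))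
                \<and> fst (F j) \<inter> MBM = {}" using spec[OF F, of j] by (elim conjE) (intro conjI)
    then show "primitive_sublattice (M j) \<and> lattice_rank (M j) = 2 \<and> anisotropic B (M j)
                \<and> h \<in> M j
                \<and> M j \<inter> orth_compl B h = {k *s v j | k. True}
                \<and> primitive_vec (v j)
                \<and> M j \<inter> MBM = {}" unfolding M_def v_def .
  qed
  show ?thesis using allj lim by blast
qed


end
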